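(* Let $V$ be a nonempty set, $E\subset V\times V$, $W\subset V$. (a) If $W',W''\subset W$ are such that $W'$ is contained in one equivalence class and $W''$ in another, distinct, equivalence class of the partial equivalence relation $C_W$, then $\operatorname{cl}_W(W')\cap\operatorname{cl}_W(W'')=\emptyset$. (b) Conversely, if $W',W''\subset V$ satisfy $W'\cap W''=\emptyset$, $W'\cup W''=W$ and $\operatorname{cl}_W(W')\cap\operatorname{cl}_W(W'')=\emptyset$, then there do not exist $w'\in W'$ and $w''\in W''$ lying in the same equivalence class of $C_W$ (i.e. with $w'\,C_W\,w''$).
   Context: Relations on $V$: $x\,R\,y$ means $(x,y)\in R$; composition $RR'$: $x(RR')y$ iff there is $z$ with $xRz$ and $zR'y$; $R^{-1}$ is the converse; $R^0=\Delta$, $R^{n+1}=RR^n$, $R^+=\bigcup_{k\ge1}R^k$, $R^*=\bigcup_{k\ge0}R^k$. For $S\subset V$, $\Delta_S=\{(x,x):x\in S\}$, $\Delta=\Delta_V$. For any relation $F$, $\mathcal T_F=\{O\subset V: OF\subset O\}$ is a topology on $V$, where $OF=\{y:\exists o\in O,\ oFy\}$. With $W^c=V\setminus W$: $E_W=\Delta_{W^c}E$; $B_W=E(E_W)^*$; $B_W^-=(B_W)^{-1}=(E_W^{-1})^*E^{-1}$; $K_W=B_W^-\Delta_{W^c}B_W$; $C_W=(\Delta_WK_W\Delta_W)^+\cup\Delta_W$, a symmetric transitive relation (an equivalence relation on $W$). For $S\subset V$, $\operatorname{cl}_W(S)$ is the topological closure of $S$ in the topology $\mathcal T_{E_W}$.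 *)

theory Defs
  imports "HOL-Analysis.Analysis"
begin

text \<open>Relations on a carrier set V are sets of pairs. R^* relative to V is
  Delta_V union R^+ (so R^0 = Delta_V, not the identity on the whole type).\<close>

definition rstar :: "'a set \<Rightarrow> 'a rel \<Rightarrow> 'a rel" where
  "rstar V R = Id_on V \<union> R\<^sup>+"

definition EW :: "'a set \<Rightarrow> 'a rel \<Rightarrow> 'a set \<Rightarrow> 'a rel" where
  "EW V E W = Id_on (V - W) O E"

definition BW :: "'a set \<Rightarrow> 'a rel \<Rightarrow> 'a set \<Rightarrow> 'a rel" where
  "BW V E W = E O rstar V (EW V E W)"

definition BWm :: "'a set \<Rightarrow> 'a rel \<Rightarrow> 'a set \<Rightarrow> 'a rel" where
  "BWm V E W = converse (BW V E W)"

definition KW :: "'a set \<Rightarrow> 'a rel \<Rightarrow> 'a set \<Rightarrow> 'a rel" where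
  "KW V E W = BWm V E W O Id_on (V - W) O BW V E W"

definition CW :: "'a set \<Rightarrow> 'a rel \<Rightarrow> 'a set \<Rightarrow> 'a rel" where
  "CW V E W = (Id_on W O KW V E W O Id_on W)\<^sup>+ \<union> Id_on W"

definition rel_topology :: "'a set \<Rightarrow> 'a rel \<Rightarrow> 'a topology" where
  "rel_topology V F = topology (\<lambda>U. U \<subseteq> V \<and> F `` U \<subseteq> U)"

definition clW :: "'a set \<Rightarrow> 'a rel \<Rightarrow> 'a set \<Rightarrow> 'a set \<Rightarrow> 'a set" where
  "clW V E W S = rel_topology V (EW V E W) closure_of S"

end

theory Submission
  imports Defs
begin

lemma rel_top_open:
  assumes "F \<subseteq> V \<times> V"
  shows "openin (rel_topology V F) = (\<lambda>U. U \<subseteq> V \<and> F `` U \<subseteq> U)"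
  unfolding rel_topology_def
proof (rule topology_inverse')
  show "istopology (\<lambda>U. U \<subseteq> V \<and> F `` U \<subseteq> U)"
    unfolding istopology_def by blast
qed

lemma rel_top_space:
  assumes "F \<subseteq> V \<times> V"
  shows "topspace (rel_topology V F) = V"
  using assms unfolding topspace_def rel_top_open[OF assms] by blast

lemma open_reach:
  assumes "F `` U \<subseteq> U" "(x,s) \<in> F\<^sup>*" "x \<in> U"
  shows "s \<in> U"
  using assms(2,3)
proof (induction rule: rtrancl_induct)
  case base then show ?case .
next
  case (step y z)
  then have "z \<in> F `` U" by (intro ImageI)
  then show ?case using assms(1) by blast
qed

lemma rel_closure:
  assumes "F \<subseteq> V \<times> V"
  shows "rel_topology V F closure_of S = {x \<in> V. \<exists>s\<in>S. (x,s) \<in> F\<^sup>*}"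
proof (rule set_eqI, rule iffI)
  fix x assume x: "x \<in> rel_topology V F closure_of S"
  then have xV: "x \<in> V" and xc: "\<And>T. x \<in> T \<Longrightarrow> openin (rel_topology V F) T \<Longrightarrow> (\<exists>y. y \<in> S \<and> y \<in> T)"
    unfolding in_closure_of rel_top_space[OF assms] by auto
  define T where "T = {y \<in> V. \<not> (\<exists>s\<in>S. (y,s) \<in> F\<^sup>*)}"
  have "F `` T \<subseteq> T"
  proof
    fix y' assume "y' \<in> F `` T"
    then obtain y where y: "y \<in> T" "(y,y') \<in> F" by (elim ImageE)
    then have "y' \<in> V" using assms by auto
    moreover have "\<not> (\<exists>s\<in>S. (y',s) \<in> F\<^sup>*)"
    proof
      assume "\<exists>s\<in>S. (y',s) \<in> F\<^sup>*"
      then obtain s where "s \<in> S" "(y',s) \<in> F\<^sup>*" by auto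
      then have "(y,s) \<in> F\<^sup>*" using y(2) by (meson converse_rtrancl_into_rtrancl)
      then show False using y(1) \<open>s \<in> S\<close> unfolding T_def by auto
    qed
    ultimately show "y' \<in> T" unfolding T_def by simp
  qed
  moreover have "T \<subseteq> V" unfolding T_def by auto
  ultimately have oT: "openin (rel_topology V F) T" unfolding rel_top_open[OF assms] by simp
  show "x \<in> {x \<in> V. \<exists>s\<in>S. (x,s) \<in> F\<^sup>*}"
  proof (rule ccontr)
    assume "x \<notin> {x \<in> V. \<exists>s\<in>S. (x,s) \<in> F\<^sup>*}"
    then have "x \<in> T" using xV unfolding T_def by simp
    then obtain y where "y \<in> S" "y \<in> T" using xc oT by blast
    then show False unfolding T_def by auto
  qed
next
  fix x assume "x \<in> {x \<in> V. \<exists>s\<in>S. (x,s) \<in> F\<^sup>*}"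
  then obtain s where xs: "x \<in> V" "s \<in> S" "(x,s) \<in> F\<^sup>*" by blast
  show "x \<in> rel_topology V F closure_of S"
    unfolding in_closure_of rel_top_space[OF assms] rel_top_open[OF assms]
  proof (intro conjI allI impI)
    show "x \<in> V" by (rule xs(1))
  next
    fix T assume "x \<in> T \<and> T \<subseteq> V \<and> F `` T \<subseteq> T"
    then have "s \<in> T" using open_reach[OF _ xs(3)] by blast
    then show "\<exists>y. y \<in> S \<and> y \<in> T" using xs(2) by blast
  qed
qed

lemma EW_sub: "E \<subseteq> V \<times> V \<Longrightarrow> EW V E W \<subseteq> V \<times> V"
  unfolding EW_def by blast

lemma clW_char:
  assumes "E \<subseteq> V \<times> V"
  shows "clW V E W S = {x \<in> V. \<exists>s\<in>S. (x,s) \<in> (EW V E W)\<^sup>*}"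
  unfolding clW_def using rel_closure[OF EW_sub[OF assms]] .

lemma BW_to_clW:
  assumes "E \<subseteq> V \<times> V" "(z,w) \<in> BW V E W" "z \<in> V - W" "w \<in> S"
  shows "z \<in> clW V E W S"
proof -
  obtain a where a: "(z,a) \<in> E" "(a,w) \<in> rstar V (EW V E W)"
    using assms(2) unfolding BW_def by blast
  have za: "(z,a) \<in> EW V E W" using a(1) assms(3) unfolding EW_def by blast
  have "(a,w) \<in> (EW V E W)\<^sup>*" using a(2) unfolding rstar_def by auto
  then have "(z,w) \<in> (EW V E W)\<^sup>*" using za by (meson converse_rtrancl_into_rtrancl)
  then show ?thesis unfolding clW_char[OF assms(1)] using assms by blast
qed

lemma trancl_to_BW:
  assumes "E \<subseteq> V \<times> V" "(z,w) \<in> (EW V E W)\<^sup>+"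
  shows "(z,w) \<in> BW V E W \<and> z \<in> V - W"
  using assms(2)
proof (rule converse_tranclE)
  assume b: "(z,w) \<in> EW V E W"
  then have "z \<in> V - W" "(z,w) \<in> E" unfolding EW_def by auto
  moreover have "w \<in> V" using assms(1) calculation by blast
  ultimately show ?thesis unfolding BW_def rstar_def by blast
next
  fix a assume st: "(z,a) \<in> EW V E W" "(a,w) \<in> (EW V E W)\<^sup>+"
  then have "z \<in> V - W" "(z,a) \<in> E" unfolding EW_def by auto
  moreover have "(a,w) \<in> rstar V (EW V E W)" using st unfolding rstar_def by blast
  ultimately show ?thesis unfolding BW_def by blast
qed

lemma CW_equiv:
  shows "equiv W (CW V E W)"
proof -
  let ?R = "Id_on W O KW V E W O Id_on W"
  have RW: "?R \<subseteq> W \<times> W" by blast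
  have symR: "sym ?R" unfolding sym_def KW_def BWm_def by blast
  have sub: "?R\<^sup>+ \<subseteq> W \<times> W" using trancl_subset_Sigma[OF RW] .
  have "sym (?R\<^sup>+)" using sym_trancl[OF symR] .
  then have s: "sym (CW V E W)" unfolding CW_def sym_def by blast
  have "trans (?R\<^sup>+)" by (rule trans_trancl)
  then have t: "trans (CW V E W)" unfolding CW_def trans_def by blast
  have r: "refl_on W (CW V E W)" unfolding CW_def refl_on_def using sub by blast
  have c: "CW V E W \<subseteq> W \<times> W" using sub unfolding CW_def by blast
  show ?thesis using c r s t by (rule equivI)
qed

theorem lemma2:
  fixes V :: "'a set" and E :: "'a rel" and W :: "'a set"
  assumes "V \<noteq> {}" and "E \<subseteq> V \<times> V" and "W \<subseteq> V"
  shows "(\<forall>W' W''. W' \<subseteq> W \<and> W'' \<subseteq> W \<and>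
            (\<exists>X \<in> W // CW V E W. \<exists>Y \<in> W // CW V E W. X \<noteq> Y \<and> W' \<subseteq> X \<and> W'' \<subseteq> Y)
            \<longrightarrow> clW V E W W' \<inter> clW V E W W'' = {})
       \<and> (\<forall>W' W''. W' \<subseteq> V \<and> W'' \<subseteq> V \<and> W' \<inter> W'' = {} \<and> W' \<union> W'' = W \<and>
            clW V E W W' \<inter> clW V E W W'' = {}
            \<longrightarrow> \<not> (\<exists>w' \<in> W'. \<exists>w'' \<in> W''. (w', w'') \<in> CW V E W))"
proof (intro conjI allI impI)
  fix W' W''
  assume h: "W' \<subseteq> W \<and> W'' \<subseteq> W \<and>
            (\<exists>X \<in> W // CW V E W. \<exists>Y \<in> W // CW V E W. X \<noteq> Y \<and> W' \<subseteq> X \<and> W'' \<subseteq> Y)"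
  then obtain X Y where XY: "X \<in> W // CW V E W" "Y \<in> W // CW V E W" "X \<noteq> Y" "W' \<subseteq> X" "W'' \<subseteq> Y"
    by blast
  show "clW V E W W' \<inter> clW V E W W'' = {}"
  proof (rule ccontr)
    assume "clW V E W W' \<inter> clW V E W W'' \<noteq> {}"
    then obtain z s1 s2 where z: "s1 \<in> W'" "s2 \<in> W''" "(z,s1) \<in> (EW V E W)\<^sup>*" "(z,s2) \<in> (EW V E W)\<^sup>*"
      unfolding clW_char[OF assms(2)] by blast
    have "(s1,s2) \<in> CW V E W"
    proof (cases "z = s1")
      case True
      then have "z \<in> W" using z h by blast
      then have "(z,s2) \<notin> (EW V E W)\<^sup>+" using trancl_to_BW[OF assms(2)] by blast
      then have "z = s2" using z(4) by (meson rtranclD)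
      then show ?thesis using True z h unfolding CW_def by blast
    next
      case False
      then have "(z,s1) \<in> (EW V E W)\<^sup>+" using z(3) by (meson rtranclD)
      then have 1: "(z,s1) \<in> BW V E W" "z \<in> V - W" using trancl_to_BW[OF assms(2)] by auto
      show ?thesis
      proof (cases "z = s2")
        case True
        then have "z \<in> W" using z h by blast
        then show ?thesis using 1 by blast
      next
        case False
        then have "(z,s2) \<in> (EW V E W)\<^sup>+" using z(4) by (meson rtranclD)
        then have 2: "(z,s2) \<in> BW V E W" using trancl_to_BW[OF assms(2)] by auto
        have "(s1,s2) \<in> KW V E W" unfolding KW_def BWm_def using 1 2 by blast
        then have "(s1,s2) \<in> Id_on W O KW V E W O Id_on W" using z h by blast
        then show ?thesis unfolding CW_def by blast
      qed
    qed
    moreover have "s1 \<in> X" "s2 \<in> Y" using z XY by auto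
    ultimately have "X = Y" using quotient_eq_iff[OF CW_equiv XY(1,2)] by blast
    then show False using XY by blast
  qed
next
  fix W' W''
  assume h0: "W' \<subseteq> V \<and> W'' \<subseteq> V \<and> W' \<inter> W'' = {} \<and> W' \<union> W'' = W \<and>
            clW V E W W' \<inter> clW V E W W'' = {}"
  have h1: "W' \<inter> W'' = {}" using h0 by (elim conjE)
  have h2: "W' \<union> W'' = W" using h0 by (elim conjE)
  have h3: "clW V E W W' \<inter> clW V E W W'' = {}" using h0 by (elim conjE)
  let ?R = "Id_on W O KW V E W O Id_on W"
  have key: "b \<in> W'" if "(a,b) \<in> ?R\<^sup>+" "a \<in> W'" for a b
    using that
  proof (induction rule: trancl_induct)
    case (base y)
    show ?case
    proof (rule ccontr)
      assume "y \<notin> W'"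
      have "y \<in> W" using base(1) by blast
      then have yW: "y \<in> W''" using h2 \<open>y \<notin> W'\<close> by blast
      obtain z where zz: "(z,a) \<in> BW V E W" "z \<in> V - W" "(z,y) \<in> BW V E W"
        using base(1) unfolding KW_def BWm_def by blast
      have "z \<in> clW V E W W'" using BW_to_clW[OF assms(2) zz(1,2) base(2)] .
      moreover have "z \<in> clW V E W W''" using BW_to_clW[OF assms(2) zz(3,2) yW] .
      ultimately show False using h3 by blast
    qed
  next
    case (step y c)
    show ?case
    proof (rule ccontr)
      assume "c \<notin> W'"
      have "c \<in> W" using step(2) by blast
      then have yW: "c \<in> W''" using h2 \<open>c \<notin> W'\<close> by blast
      obtain z where zz: "(z,y) \<in> BW V E W" "z \<in> V - W" "(z,c) \<in> BW V E W"
        using step(2) unfolding KW_def BWm_def by blast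
      have "z \<in> clW V E W W'" using BW_to_clW[OF assms(2) zz(1,2) step(3)[OF step(4)]] .
      moreover have "z \<in> clW V E W W''" using BW_to_clW[OF assms(2) zz(3,2) yW] .
      ultimately show False using h3 by blast
    qed
  qed
  show "\<not> (\<exists>w' \<in> W'. \<exists>w'' \<in> W''. (w', w'') \<in> CW V E W)"
  proof
    assume "\<exists>w' \<in> W'. \<exists>w'' \<in> W''. (w', w'') \<in> CW V E W"
    then obtain w1 w2 where w: "w1 \<in> W'" "w2 \<in> W''" "(w1,w2) \<in> CW V E W" by blast
    then have "w1 \<noteq> w2" using h1 by blast
    have u: "(w1,w2) \<in> ?R\<^sup>+ \<union> Id_on W" using w(3) unfolding CW_def .
    have "(w1,w2) \<in> ?R\<^sup>+"
    proof (rule UnE[OF u])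
      assume "(w1,w2) \<in> Id_on W"
      then have "w1 = w2" by (rule Id_onE) simp
      then show ?thesis using \<open>w1 \<noteq> w2\<close> by contradiction
    qed
    then have "w2 \<in> W'" by (rule key) (rule w(1))
    then show False using w(2) h1 by blast
  qed
qed

end
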